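(* For any two graphons $w,w'$, $|\delta(w)-\delta(w')|\le 2\sqrt{\delta_{\square}(w,w')}$. In particular, the degeneracy is continuous with respect to the cut metric.
   Context: A graphon is a Lebesgue-measurable symmetric function $w:[0,1]^2\to[0,1]$. For a measurable $K\subseteq[0,1]$ let $d_w^K(x)=\int_K w(x,y)\,\mathrm{d}y$ and $d_w(x)=d_w^{[0,1]}(x)$. For $\kappa\in[0,1]$ define recursively $K^{1}_{\kappa}(w)=\{x: d_w(x)\ge\kappa\}$ and $K^{n+1}_{\kappa}(w)=\{x\in K^{n}_{\kappa}(w): d_w^{K^{n}_{\kappa}(w)}(x)\ge\kappa\}$, the $\kappa$-core is $K_{\kappa}(w)=\bigcap_{n\ge1}K^{n}_{\kappa}(w)$, and the degeneracy is $\delta(w)=\sup\{\kappa\in[0,1]: |K_\kappa(w)|>0\}$ ($|\cdot|$ Lebesgue measure). A map $\sigma:[0,1]\to[0,1]$ is measure-preserving if it is measurable and $|\sigma^{-1}(A)|=|A|$ for all measurable $A$; then $w^\sigma(x,y)=w(\sigma(x),\sigma(y))$. Define $d_\square(w,w')=\sup_{S,T\subseteq[0,1]}\left|\int_S\int_T (w(x,y)-w'(x,y))\,\mathrm{d}y\,\mathrm{d}x\right|$ (over measurable $S,T$) and the cut metric $\delta_\square(w,w')=\inf_\sigma d_\square(w^\sigma,w')$, the infimum over all measure-preserving maps $\sigma$. *)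

theory Defs
  imports "HOL-Analysis.Analysis"
begin

text \<open>Graphons are represented as curried functions real => real => real; only their
values on the unit square matter. Lebesgue measure is the measure lebesgue on reals.\<close>

definition graphon :: "(real \<Rightarrow> real \<Rightarrow> real) \<Rightarrow> bool" where
  "graphon w \<longleftrightarrow>
     (\<lambda>(x, y). w x y) \<in> borel_measurable (lebesgue_on ({0..1} \<times> {0..1})) \<and>
     (\<forall>x\<in>{0..1}. \<forall>y\<in>{0..1}. w x y = w y x) \<and>
     (\<forall>x\<in>{0..1}. \<forall>y\<in>{0..1}. 0 \<le> w x y \<and> w x y \<le> 1)"

definition deg_on :: "(real \<Rightarrow> real \<Rightarrow> real) \<Rightarrow> real set \<Rightarrow> real \<Rightarrow> real" where
  "deg_on w K x = (LINT y:K|lebesgue. w x y)"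

definition core_step :: "real \<Rightarrow> (real \<Rightarrow> real \<Rightarrow> real) \<Rightarrow> real set \<Rightarrow> real set" where
  "core_step \<kappa> w K = {x \<in> K. deg_on w K x \<ge> \<kappa>}"

text \<open>K^n_kappa(w) for n >= 1; K^1 = core_step applied to [0,1] (d_w = d_w^[0,1]).\<close>
definition core_iter :: "nat \<Rightarrow> real \<Rightarrow> (real \<Rightarrow> real \<Rightarrow> real) \<Rightarrow> real set" where
  "core_iter n \<kappa> w = (core_step \<kappa> w ^^ n) {0..1}"

definition core :: "real \<Rightarrow> (real \<Rightarrow> real \<Rightarrow> real) \<Rightarrow> real set" where
  "core \<kappa> w = (\<Inter>n\<in>{1..}. core_iter n \<kappa> w)"

definition degeneracy :: "(real \<Rightarrow> real \<Rightarrow> real) \<Rightarrow> real" where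
  "degeneracy w = Sup {\<kappa> \<in> {0..1}. emeasure lebesgue (core \<kappa> w) > 0}"

definition measure_preserving_unit :: "(real \<Rightarrow> real) \<Rightarrow> bool" where
  "measure_preserving_unit \<sigma> \<longleftrightarrow>
     \<sigma> \<in> lebesgue_on {0..1} \<rightarrow>\<^sub>M lebesgue_on {0..1} \<and>
     (\<forall>A. A \<in> sets lebesgue \<and> A \<subseteq> {0..1} \<longrightarrow>
        emeasure lebesgue (\<sigma> -` A \<inter> {0..1}) = emeasure lebesgue A)"

definition cut_norm_dist :: "(real \<Rightarrow> real \<Rightarrow> real) \<Rightarrow> (real \<Rightarrow> real \<Rightarrow> real) \<Rightarrow> real" where
  "cut_norm_dist w w' = Sup {\<bar>LINT x:S|lebesgue. LINT y:T|lebesgue. (w x y - w' x y)\<bar> | S T.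
       S \<in> sets lebesgue \<and> S \<subseteq> {0..1} \<and> T \<in> sets lebesgue \<and> T \<subseteq> {0..1}}"

definition cut_metric :: "(real \<Rightarrow> real \<Rightarrow> real) \<Rightarrow> (real \<Rightarrow> real \<Rightarrow> real) \<Rightarrow> real" where
  "cut_metric w w' = Inf {cut_norm_dist (\<lambda>x y. w (\<sigma> x) (\<sigma> y)) w' | \<sigma>. measure_preserving_unit \<sigma>}"

end

theory Submission
  imports Defs
begin


abbreviation UI :: "real set" where "UI \<equiv> {0..1}"

lemma UI_sets[simp, measurable]: "UI \<in> sets lebesgue" by simp

lemma space_M[simp]: "space (lebesgue_on UI) = UI"
  by (simp add: space_restrict_space)

lemma sets_M_iff: "A \<in> sets (lebesgue_on UI) \<longleftrightarrow> A \<in> sets lebesgue \<and> A \<subseteq> UI"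
  by (auto simp: sets_restrict_space_iff)

lemma lint_M:
  fixes f :: "real \<Rightarrow> real"
  assumes "K \<in> sets lebesgue" "K \<subseteq> UI"
  shows "(LINT y:K|lebesgue. f y) = integral\<^sup>L (lebesgue_on UI) (\<lambda>y. indicator K y * f y)"
proof -
  have "integral\<^sup>L (lebesgue_on UI) (\<lambda>y. indicator K y * f y)
     = integral\<^sup>L lebesgue (\<lambda>y. indicator UI y *\<^sub>R (indicator K y * f y))"
    using integral_restrict_space[of UI lebesgue "\<lambda>y. indicator K y * f y"] by simp
  also have "\<dots> = integral\<^sup>L lebesgue (\<lambda>y. indicator K y *\<^sub>R f y)"
    using assms(2) by (intro Bochner_Integration.integral_cong) (auto simp: indicator_def)
  finally show ?thesis by (simp add: set_lebesgue_integral_def)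
qed

lemma emeasure_M: "A \<in> sets (lebesgue_on UI) \<Longrightarrow> emeasure (lebesgue_on UI) A = emeasure lebesgue A"
  by (simp add: emeasure_restrict_space sets_M_iff)

lemma measure_M: "A \<in> sets (lebesgue_on UI) \<Longrightarrow> measure (lebesgue_on UI) A = measure lebesgue A"
  by (simp add: measure_restrict_space sets_M_iff)

lemma finite_M: "finite_measure (lebesgue_on UI)"
  by (rule finite_measureI) (simp add: emeasure_restrict_space)

interpretation MM: finite_measure "lebesgue_on UI" by (rule finite_M)

lemma mp_distr:
  assumes "measure_preserving_unit \<sigma>"
  shows "distr (lebesgue_on UI) (lebesgue_on UI) \<sigma> = lebesgue_on UI"
proof (rule measure_eqI)
  show "sets (distr (lebesgue_on UI) (lebesgue_on UI) \<sigma>) = sets (lebesgue_on UI)" by simp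
  fix A assume A: "A \<in> sets (distr (lebesgue_on UI) (lebesgue_on UI) \<sigma>)"
  then have A': "A \<in> sets lebesgue" "A \<subseteq> UI" by (auto simp: sets_M_iff)
  have m: "\<sigma> \<in> lebesgue_on UI \<rightarrow>\<^sub>M lebesgue_on UI" using assms by (simp add: measure_preserving_unit_def)
  have "emeasure (distr (lebesgue_on UI) (lebesgue_on UI) \<sigma>) A = emeasure (lebesgue_on UI) (\<sigma> -` A \<inter> UI)"
    using A m by (simp add: emeasure_distr)
  also have "\<dots> = emeasure lebesgue (\<sigma> -` A \<inter> UI)"
    using measurable_sets[OF m, of A] A by (simp add: emeasure_M)
  also have "\<dots> = emeasure lebesgue A" using assms A' by (simp add: measure_preserving_unit_def)
  also have "\<dots> = emeasure (lebesgue_on UI) A" using A' by (simp add: emeasure_M sets_M_iff)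
  finally show "emeasure (distr (lebesgue_on UI) (lebesgue_on UI) \<sigma>) A = emeasure (lebesgue_on UI) A" .
qed

lemma M_AE_measurable:
  fixes f g :: "real \<Rightarrow> real"
  assumes g: "g \<in> borel_measurable (lebesgue_on UI)" and ae: "AE x in lebesgue_on UI. f x = g x"
  shows "f \<in> borel_measurable (lebesgue_on UI)"
proof -
  have g': "(\<lambda>x. indicator UI x *\<^sub>R g x) \<in> borel_measurable lebesgue"
    using g by (simp add: borel_measurable_restrict_space_iff)
  have ae': "AE x in lebesgue. indicator UI x *\<^sub>R f x = indicator UI x *\<^sub>R g x"
    using ae by (auto simp: AE_restrict_space_iff indicator_def elim!: eventually_mono)
  have "(\<lambda>x. indicator UI x *\<^sub>R f x) \<in> borel_measurable lebesgue"
  proof (rule borel_measurableI_less)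
    fix a :: real
    have "{x \<in> space lebesgue. indicator UI x *\<^sub>R g x < a} \<in> sets lebesgue"
      using g' by measurable
    then show "{x \<in> space lebesgue. indicator UI x *\<^sub>R f x < a} \<in> sets lebesgue"
    proof (rule completion.in_sets_AE[rotated])
      show "AE x in lebesgue. (x \<in> {x \<in> space lebesgue. indicator UI x *\<^sub>R g x < a}) =
              (x \<in> {x \<in> space lebesgue. indicator UI x *\<^sub>R f x < a})"
        using ae' by eventually_elim (metis (mono_tags, lifting) mem_Collect_eq)
    qed simp
  qed
  then show ?thesis by (simp add: borel_measurable_restrict_space_iff)
qed

lemma borel_to_M: "h \<in> borel_measurable borel \<Longrightarrow> h \<in> borel_measurable (lebesgue_on S)"
  for h :: "real \<Rightarrow> real"
  by (intro measurable_restrict_space1 measurable_completion) simp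

lemma borel_pair_M:
  fixes g :: "real \<times> real \<Rightarrow> real" and a b :: "'a \<Rightarrow> real"
  assumes g: "g \<in> borel_measurable borel" and a: "a \<in> borel_measurable N" and b: "b \<in> borel_measurable N"
  shows "(\<lambda>z. g (a z, b z)) \<in> borel_measurable N"
proof -
  have "(\<lambda>z. (a z, b z)) \<in> N \<rightarrow>\<^sub>M borel \<Otimes>\<^sub>M borel" using a b by (rule measurable_Pair)
  then have "(\<lambda>z. (a z, b z)) \<in> N \<rightarrow>\<^sub>M borel" by (simp add: borel_prod)
  from measurable_comp[OF this g] show ?thesis by (simp add: o_def)
qed

lemma graphon_reg:
  assumes "graphon w"
  obtains g N where "g \<in> borel_measurable (borel :: (real \<times> real) measure)" "N \<in> null_sets lebesgue"
    "\<And>x. x \<in> UI - N \<Longrightarrow> AE y in lebesgue_on UI. w x y = g (x, y)"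
proof -
  have S: "UI \<times> UI \<in> sets (lebesgue :: (real \<times> real) measure)"
    by (intro sets_completionI_sets) (simp add: borel_closed closed_Times)
  have "(\<lambda>(x, y). w x y) \<in> borel_measurable (lebesgue_on (UI \<times> UI))"
    using assms by (simp add: graphon_def)
  then have f: "(\<lambda>z. indicator (UI \<times> UI) z *\<^sub>R (case z of (x, y) \<Rightarrow> w x y)) \<in> borel_measurable lebesgue"
    using S by (simp add: borel_measurable_restrict_space_iff)
  obtain g where g: "g \<in> borel_measurable lborel"
    and ae: "AE z in lborel. indicator (UI \<times> UI) z *\<^sub>R (case z of (x, y) \<Rightarrow> w x y) = g z"
    using completion_ex_borel_measurable_real[OF f] by blast
  have "AE z in (lborel \<Otimes>\<^sub>M lborel :: (real \<times> real) measure). indicator (UI \<times> UI) z *\<^sub>R (case z of (x, y) \<Rightarrow> w x y) = g z"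
    using ae by (simp only: lborel_prod)
  from lborel_pair.AE_pair[OF this]
  have AEx: "AE x in lborel. AE y in lborel. indicator (UI \<times> UI) (x, y) *\<^sub>R w x y = g (x, y)" by simp
  from AEx obtain N where
     NN: "{x \<in> space lborel. \<not> (AE y in lborel. indicator (UI \<times> UI) (x, y) *\<^sub>R w x y = g (x, y))} \<subseteq> N"
     and N0: "emeasure lborel N = 0" "N \<in> sets lborel"
    by (rule AE_E)
  have N: "N \<in> null_sets lborel" using N0 by (simp add: null_setsI)
  show ?thesis
  proof
    show "g \<in> borel_measurable borel" using g by simp
    show "N \<in> null_sets lebesgue" using N by (rule null_sets_completionI)
    fix x assume x: "x \<in> UI - N"
    then have "AE y in lborel. indicator (UI \<times> UI) (x, y) *\<^sub>R w x y = g (x, y)" using NN by auto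
    then have "AE y in lebesgue. indicator (UI \<times> UI) (x, y) *\<^sub>R w x y = g (x, y)" by (rule AE_completion)
    then show "AE y in lebesgue_on UI. w x y = g (x, y)"
      using x by (auto simp: AE_restrict_space_iff indicator_def elim!: eventually_mono)
  qed
qed

lemma reg_meas:
  fixes w :: "real \<Rightarrow> real \<Rightarrow> real"
  assumes g: "g \<in> borel_measurable (borel :: (real \<times> real) measure)"
    and ae: "AE y in lebesgue_on UI. w x y = g (x, y)"
  shows "w x \<in> borel_measurable (lebesgue_on UI)"
proof (rule M_AE_measurable[where g="\<lambda>y. g (x, y)"])
  show "AE y in lebesgue_on UI. w x y = g (x, y)" by (rule ae)
  show "(\<lambda>y. g (x, y)) \<in> borel_measurable (lebesgue_on UI)"
    by (rule borel_pair_M[OF g]) (auto intro: borel_to_M)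
qed



lemma AE_UI: "AE x in lebesgue_on UI. x \<in> UI" by (rule AE_I2) simp

lemma nullM: "N \<in> null_sets lebesgue \<Longrightarrow> AE x in lebesgue_on UI. x \<notin> N"
proof -
  assume N: "N \<in> null_sets lebesgue"
  have "N \<inter> UI \<in> null_sets (lebesgue_on UI)"
    using N by (simp add: null_sets_restrict_space null_set_Int2)
  from AE_not_in[OF this] have "AE x in lebesgue_on UI. x \<notin> N \<inter> UI" .
  moreover have "AE x in lebesgue_on UI. x \<in> UI" by (rule AE_I2) simp
  ultimately show ?thesis by eventually_elim auto
qed

lemma graphon_bnd:
  assumes "graphon w" "x \<in> UI" "y \<in> UI" shows "0 \<le> w x y" "w x y \<le> 1"
  using assms by (auto simp: graphon_def)

lemma integrable_M_bnd:
  fixes f :: "real \<Rightarrow> real"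
  assumes "f \<in> borel_measurable (lebesgue_on UI)" "\<And>y. y \<in> UI \<Longrightarrow> \<bar>f y\<bar> \<le> B"
  shows "integrable (lebesgue_on UI) f"
  by (rule MM.integrable_const_bound[where B=B]) (use assms in auto)

lemma K_meas: "K \<in> sets lebesgue \<Longrightarrow> K \<subseteq> UI \<Longrightarrow> indicator K \<in> borel_measurable (lebesgue_on UI)"
  by (rule borel_measurable_indicator) (simp add: sets_M_iff)

lemma deg_M:
  "K \<in> sets lebesgue \<Longrightarrow> K \<subseteq> UI \<Longrightarrow> deg_on w K x = integral\<^sup>L (lebesgue_on UI) (\<lambda>y. indicator K y * w x y)"
  unfolding deg_on_def by (rule lint_M)

lemma fst_M: "fst \<in> borel_measurable (lebesgue_on UI \<Otimes>\<^sub>M lebesgue_on UI)"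
  using measurable_comp[OF measurable_fst borel_to_M[of "\<lambda>z. z"]] by (simp add: o_def)

lemma snd_M: "snd \<in> borel_measurable (lebesgue_on UI \<Otimes>\<^sub>M lebesgue_on UI)"
  using measurable_comp[OF measurable_snd borel_to_M[of "\<lambda>z. z"]] by (simp add: o_def)

lemma deg_measurable:
  fixes w :: "real \<Rightarrow> real \<Rightarrow> real"
  assumes g: "g \<in> borel_measurable (borel :: (real \<times> real) measure)" and N: "N \<in> null_sets lebesgue"
    and ae: "\<And>x. x \<in> UI - N \<Longrightarrow> AE y in lebesgue_on UI. w x y = g (x, y)"
    and K: "K \<in> sets lebesgue" "K \<subseteq> UI"
  shows "deg_on w K \<in> borel_measurable (lebesgue_on UI)"
proof (rule M_AE_measurable)
  let ?M = "lebesgue_on UI"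
  have "(\<lambda>z. indicator K (snd z) * g (fst z, snd z)) \<in> borel_measurable (?M \<Otimes>\<^sub>M ?M)"
  proof (rule borel_measurable_times)
    show "(\<lambda>z. indicator K (snd z)) \<in> borel_measurable (?M \<Otimes>\<^sub>M ?M)"
      using measurable_comp[OF measurable_snd K_meas[OF K]] by (simp add: o_def)
    show "(\<lambda>z. g (fst z, snd z)) \<in> borel_measurable (?M \<Otimes>\<^sub>M ?M)"
      by (rule borel_pair_M[OF g fst_M snd_M])
  qed
  then have "case_prod (\<lambda>x y. indicator K y * g (x, y)) \<in> borel_measurable (?M \<Otimes>\<^sub>M ?M)"
    by (simp add: case_prod_beta')
  from MM.borel_measurable_lebesgue_integral[OF this]
  show "(\<lambda>x. integral\<^sup>L ?M (\<lambda>y. indicator K y * g (x, y))) \<in> borel_measurable ?M" .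
  show "AE x in ?M. deg_on w K x = integral\<^sup>L ?M (\<lambda>y. indicator K y * g (x, y))"
    using nullM[OF N] AE_UI
  proof eventually_elim
    case (elim x)
    show ?case
    proof -
      from elim have aex: "AE y in ?M. w x y = g (x, y)" using ae by auto
      have wm: "w x \<in> borel_measurable ?M" by (rule reg_meas[where w=w and x=x, OF g aex])
      have gm: "(\<lambda>y. g (x, y)) \<in> borel_measurable ?M"
        by (rule borel_pair_M[OF g]) (auto intro: borel_to_M)
      show ?thesis unfolding deg_M[OF K]
        apply (rule integral_cong_AE)
        using wm gm K_meas[OF K] aex by (auto intro!: borel_measurable_times elim!: eventually_mono)
    qed
  qed
qed



definition greg :: "(real \<Rightarrow> real \<Rightarrow> real) \<Rightarrow> (real \<times> real \<Rightarrow> real) \<Rightarrow> real set \<Rightarrow> bool" where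
  "greg w g N \<longleftrightarrow> g \<in> borel_measurable borel \<and> N \<in> null_sets lebesgue \<and>
     (\<forall>x\<in>UI - N. AE y in lebesgue_on UI. w x y = g (x, y))"

lemma greg_ex: "graphon w \<Longrightarrow> \<exists>g N. greg w g N"
  unfolding greg_def by (metis graphon_reg)

lemma greg_deg_meas:
  "greg w g N \<Longrightarrow> K \<in> sets lebesgue \<Longrightarrow> K \<subseteq> UI \<Longrightarrow> deg_on w K \<in> borel_measurable (lebesgue_on UI)"
  unfolding greg_def by (intro deg_measurable[where g=g and N=N]) auto

lemma greg_good: "greg w g N \<Longrightarrow> x \<in> UI - N \<Longrightarrow> w x \<in> borel_measurable (lebesgue_on UI)"
  unfolding greg_def by (intro reg_meas[where g=g]) auto

lemma core_iter_0[simp]: "core_iter 0 \<kappa> w = UI" by (simp add: core_iter_def)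

lemma core_iter_Suc: "core_iter (Suc n) \<kappa> w = core_step \<kappa> w (core_iter n \<kappa> w)"
  by (simp add: core_iter_def)

lemma core_iter_dec: "core_iter (Suc n) \<kappa> w \<subseteq> core_iter n \<kappa> w"
  by (auto simp: core_iter_Suc core_step_def)

lemma core_iter_sub: "core_iter n \<kappa> w \<subseteq> UI"
proof (induction n)
  case 0 then show ?case by simp
next
  case (Suc n) then show ?case using core_iter_dec[of n \<kappa> w] by blast
qed

lemma core_iter_sets: assumes gr: "greg w g N" shows "core_iter n \<kappa> w \<in> sets lebesgue"
proof (induction n)
  case 0 then show ?case by simp
next
  case (Suc n)
  let ?K = "core_iter n \<kappa> w"
  have dm: "deg_on w ?K \<in> borel_measurable (lebesgue_on UI)"
    using greg_deg_meas[OF gr Suc.IH core_iter_sub] .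
  have "{x \<in> space (lebesgue_on UI). \<kappa> \<le> deg_on w ?K x} \<in> sets (lebesgue_on UI)"
    using dm by measurable
  then have s: "{x \<in> UI. \<kappa> \<le> deg_on w ?K x} \<in> sets lebesgue" by (simp add: sets_M_iff)
  have "core_iter (Suc n) \<kappa> w = ?K \<inter> {x \<in> UI. \<kappa> \<le> deg_on w ?K x}"
    using core_iter_sub[of n \<kappa> w] by (auto simp: core_iter_Suc core_step_def)
  then show ?case using s Suc.IH by simp
qed

lemma core_eq: "core \<kappa> w = (\<Inter>n. core_iter n \<kappa> w)"
proof -
  have "\<And>n. core_iter (Suc n) \<kappa> w \<subseteq> core_iter n \<kappa> w" by (rule core_iter_dec)
  then show ?thesis unfolding core_def
    by auto
qed

lemma core_sub: "core \<kappa> w \<subseteq> UI"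
proof -
  have "core \<kappa> w \<subseteq> core_iter 0 \<kappa> w" unfolding core_eq by blast
  then show ?thesis by simp
qed

lemma core_sets: "greg w g N \<Longrightarrow> core \<kappa> w \<in> sets lebesgue"
  unfolding core_eq by (intro sets.countable_INT'') (auto intro: core_iter_sets)

lemma mp_meas: "measure_preserving_unit \<sigma> \<Longrightarrow> \<sigma> \<in> lebesgue_on UI \<rightarrow>\<^sub>M lebesgue_on UI"
  by (simp add: measure_preserving_unit_def)

lemma mp_UI: "measure_preserving_unit \<sigma> \<Longrightarrow> y \<in> UI \<Longrightarrow> \<sigma> y \<in> UI"
  using measurable_space[OF mp_meas] by fastforce

lemma mp_pre_sets: "measure_preserving_unit \<sigma> \<Longrightarrow> K \<in> sets lebesgue \<Longrightarrow> K \<subseteq> UI \<Longrightarrow>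
   \<sigma> -` K \<inter> UI \<in> sets lebesgue"
  using measurable_sets[OF mp_meas, of \<sigma> K] by (simp add: sets_M_iff)

lemma mp_pre_emeasure: "measure_preserving_unit \<sigma> \<Longrightarrow> K \<in> sets lebesgue \<Longrightarrow> K \<subseteq> UI \<Longrightarrow>
   emeasure lebesgue (\<sigma> -` K \<inter> UI) = emeasure lebesgue K"
  by (simp add: measure_preserving_unit_def)

lemma mp_comp: "measure_preserving_unit \<sigma> \<Longrightarrow> h \<in> borel_measurable (lebesgue_on UI) \<Longrightarrow>
   (\<lambda>y. h (\<sigma> y)) \<in> borel_measurable (lebesgue_on UI)"
  using measurable_comp[OF mp_meas, of \<sigma> h] by (simp add: o_def)

lemma change_var:
  fixes h :: "real \<Rightarrow> real"
  assumes mp: "measure_preserving_unit \<sigma>" and h: "h \<in> borel_measurable (lebesgue_on UI)"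
    and K: "K \<in> sets lebesgue" "K \<subseteq> UI"
  shows "integral\<^sup>L (lebesgue_on UI) (\<lambda>z. indicator K z * h z)
       = integral\<^sup>L (lebesgue_on UI) (\<lambda>y. indicator (\<sigma> -` K \<inter> UI) y * h (\<sigma> y))"
proof -
  have f: "(\<lambda>z. indicator K z * h z) \<in> borel_measurable (lebesgue_on UI)"
    using h K_meas[OF K] by (auto intro: borel_measurable_times)
  have "integral\<^sup>L (lebesgue_on UI) (\<lambda>z. indicator K z * h z)
      = integral\<^sup>L (distr (lebesgue_on UI) (lebesgue_on UI) \<sigma>) (\<lambda>z. indicator K z * h z)"
    by (simp add: mp_distr[OF mp])
  also have "\<dots> = integral\<^sup>L (lebesgue_on UI) (\<lambda>y. indicator K (\<sigma> y) * h (\<sigma> y))"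
    by (rule integral_distr[OF mp_meas[OF mp] f])
  also have "\<dots> = integral\<^sup>L (lebesgue_on UI) (\<lambda>y. indicator (\<sigma> -` K \<inter> UI) y * h (\<sigma> y))"
    by (rule Bochner_Integration.integral_cong) (auto simp: indicator_def)
  finally show ?thesis .
qed

lemma core_contain:
  fixes w :: "real \<Rightarrow> real \<Rightarrow> real"
  assumes mp: "measure_preserving_unit \<sigma>" and gw: "graphon w" and gr: "greg w g N"
    and L: "L \<in> sets lebesgue" "L \<subseteq> UI"
    and H: "\<And>x. x \<in> L \<Longrightarrow> w (\<sigma> x) \<in> borel_measurable (lebesgue_on UI) \<and>
              \<kappa> \<le> integral\<^sup>L (lebesgue_on UI) (\<lambda>y. indicator L y * w (\<sigma> x) (\<sigma> y))"
  shows "\<sigma> ` L \<subseteq> core \<kappa> w"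
proof -
  have "\<sigma> ` L \<subseteq> core_iter n \<kappa> w" for n
  proof (induction n)
    case 0 then show ?case using L mp_UI[OF mp] by auto
  next
    case (Suc n)
    let ?K = "core_iter n \<kappa> w"
    have K: "?K \<in> sets lebesgue" "?K \<subseteq> UI" using core_iter_sets[OF gr] core_iter_sub by auto
    show ?case
    proof
      fix z assume "z \<in> \<sigma> ` L"
      then obtain x where x: "x \<in> L" "z = \<sigma> x" by auto
      have xU: "x \<in> UI" using x L by auto
      have wm: "w (\<sigma> x) \<in> borel_measurable (lebesgue_on UI)" and ge: "\<kappa> \<le> integral\<^sup>L (lebesgue_on UI) (\<lambda>y. indicator L y * w (\<sigma> x) (\<sigma> y))"
        using H[OF x(1)] by auto
      have wcm: "(\<lambda>y. w (\<sigma> x) (\<sigma> y)) \<in> borel_measurable (lebesgue_on UI)"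
        by (rule mp_comp[OF mp wm])
      have S: "\<sigma> -` ?K \<inter> UI \<in> sets lebesgue" using mp_pre_sets[OF mp K] .
      have "integral\<^sup>L (lebesgue_on UI) (\<lambda>y. indicator L y * w (\<sigma> x) (\<sigma> y))
          \<le> integral\<^sup>L (lebesgue_on UI) (\<lambda>y. indicator (\<sigma> -` ?K \<inter> UI) y * w (\<sigma> x) (\<sigma> y))"
      proof (rule integral_mono)
        show "integrable (lebesgue_on UI) (\<lambda>y. indicator L y * w (\<sigma> x) (\<sigma> y))"
        proof (rule integrable_M_bnd[where B=1])
          show "(\<lambda>y. indicator L y * w (\<sigma> x) (\<sigma> y)) \<in> borel_measurable (lebesgue_on UI)"
            by (intro borel_measurable_times K_meas[OF L] wcm)
          fix y assume "y \<in> UI"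
          then show "\<bar>indicator L y * w (\<sigma> x) (\<sigma> y)\<bar> \<le> 1"
            using graphon_bnd[OF gw] mp_UI[OF mp] xU by (auto simp: indicator_def)
        qed
        show "integrable (lebesgue_on UI) (\<lambda>y. indicator (\<sigma> -` ?K \<inter> UI) y * w (\<sigma> x) (\<sigma> y))"
        proof (rule integrable_M_bnd[where B=1])
          show "(\<lambda>y. indicator (\<sigma> -` ?K \<inter> UI) y * w (\<sigma> x) (\<sigma> y)) \<in> borel_measurable (lebesgue_on UI)"
            by (intro borel_measurable_times K_meas[OF S Int_lower2] wcm)
          fix y assume "y \<in> UI"
          then show "\<bar>indicator (\<sigma> -` ?K \<inter> UI) y * w (\<sigma> x) (\<sigma> y)\<bar> \<le> 1"
            using graphon_bnd[OF gw] mp_UI[OF mp] xU by (auto simp: indicator_def)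
        qed
        fix y assume "y \<in> space (lebesgue_on UI)"
        then have yU: "y \<in> UI" by simp
        have "0 \<le> w (\<sigma> x) (\<sigma> y)" using graphon_bnd[OF gw] mp_UI[OF mp] xU yU by auto
        moreover have "y \<in> L \<Longrightarrow> y \<in> \<sigma> -` ?K \<inter> UI" using Suc.IH yU by auto
        ultimately show "indicator L y * w (\<sigma> x) (\<sigma> y) \<le> indicator (\<sigma> -` ?K \<inter> UI) y * w (\<sigma> x) (\<sigma> y)"
          by (auto simp: indicator_def)
      qed
      also have "\<dots> = deg_on w ?K (\<sigma> x)"
        using change_var[OF mp wm K] deg_M[OF K] by simp
      finally have "\<kappa> \<le> deg_on w ?K (\<sigma> x)" using ge by linarith
      moreover have "\<sigma> x \<in> ?K" using Suc.IH x by auto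
      ultimately show "z \<in> core_iter (Suc n) \<kappa> w" using x by (simp add: core_iter_Suc core_step_def)
    qed
  qed
  then show ?thesis by (auto simp: core_eq)
qed

lemma core_fix:
  fixes w :: "real \<Rightarrow> real \<Rightarrow> real"
  assumes gw: "graphon w" and gr: "greg w g N" and x: "x \<in> core \<kappa> w"
    and wm: "w x \<in> borel_measurable (lebesgue_on UI)"
  shows "\<kappa> \<le> deg_on w (core \<kappa> w) x"
proof -
  let ?K = "\<lambda>n. core_iter n \<kappa> w"
  have K: "\<And>n. ?K n \<in> sets lebesgue" "\<And>n. ?K n \<subseteq> UI" using core_iter_sets[OF gr] core_iter_sub by auto
  have C: "core \<kappa> w \<in> sets lebesgue" "core \<kappa> w \<subseteq> UI" using core_sets[OF gr] core_sub by auto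
  have xU: "x \<in> UI" using x core_sub by blast
  have ge: "\<kappa> \<le> deg_on w (?K n) x" for n
    using x by (auto simp: core_eq core_iter_Suc core_step_def dest: spec[of _ "Suc n"])
  have dec: "antimono_on UNIV ?K"
    using decseq_SucI[of ?K, OF core_iter_dec] .
  have "(\<lambda>n. integral\<^sup>L (lebesgue_on UI) (\<lambda>y. indicator (?K n) y * w x y))
     \<longlonglongrightarrow> integral\<^sup>L (lebesgue_on UI) (\<lambda>y. indicator (core \<kappa> w) y * w x y)"
  proof (rule integral_dominated_convergence[where w="\<lambda>_. 1"])
    show "(\<lambda>y. indicator (core \<kappa> w) y * w x y) \<in> borel_measurable (lebesgue_on UI)"
      using wm K_meas[OF C] by (auto intro: borel_measurable_times)
    show "(\<lambda>y. indicator (?K n) y * w x y) \<in> borel_measurable (lebesgue_on UI)" for n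
      using wm K_meas[OF K(1) K(2)] by (auto intro: borel_measurable_times)
    show "integrable (lebesgue_on UI) (\<lambda>_. 1::real)" by simp
    show "AE y in lebesgue_on UI. (\<lambda>n. indicator (?K n) y * w x y) \<longlonglongrightarrow> indicator (core \<kappa> w) y * w x y"
      by (rule AE_I2, rule tendsto_mult_right) (simp add: core_eq LIMSEQ_indicator_decseq[OF dec])
    show "AE y in lebesgue_on UI. norm (indicator (?K n) y * w x y) \<le> 1" for n
      using AE_UI by eventually_elim (use graphon_bnd[OF gw] xU in \<open>auto simp: indicator_def\<close>)
  qed
  then have "(\<lambda>n. deg_on w (?K n) x) \<longlonglongrightarrow> deg_on w (core \<kappa> w) x"
    using deg_M[OF K(1) K(2)] deg_M[OF C] by simp
  then show ?thesis using ge by (intro LIMSEQ_le_const) auto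
qed



lemma measure_M_UI[simp]: "measure (lebesgue_on UI) UI = 1"
  by (simp add: measure_restrict_space)

lemma int_abs_le:
  fixes f :: "real \<Rightarrow> real"
  assumes "\<And>y. y \<in> UI \<Longrightarrow> \<bar>f y\<bar> \<le> 1"
  shows "\<bar>integral\<^sup>L (lebesgue_on UI) f\<bar> \<le> 1"
proof (cases "integrable (lebesgue_on UI) f")
  case True
  have "\<bar>integral\<^sup>L (lebesgue_on UI) f\<bar> \<le> integral\<^sup>L (lebesgue_on UI) (\<lambda>y. \<bar>f y\<bar>)"
    using integral_norm_bound[of "lebesgue_on UI" f] by simp
  also have "\<dots> \<le> integral\<^sup>L (lebesgue_on UI) (\<lambda>y. 1)"
    by (rule integral_mono) (use True assms in auto)
  also have "\<dots> = 1" by simp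
  finally show ?thesis .
next
  case False then show ?thesis by (simp add: not_integrable_integral_eq)
qed

lemma lint_abs_le:
  fixes f :: "real \<Rightarrow> real"
  assumes S: "S \<in> sets lebesgue" "S \<subseteq> UI" and b: "\<And>y. y \<in> S \<Longrightarrow> \<bar>f y\<bar> \<le> 1"
  shows "\<bar>LINT y:S|lebesgue. f y\<bar> \<le> 1"
  unfolding lint_M[OF S] by (rule int_abs_le) (use b in \<open>auto simp: indicator_def\<close>)

lemma cut_bdd:
  fixes u w' :: "real \<Rightarrow> real \<Rightarrow> real"
  assumes "\<And>x y. x \<in> UI \<Longrightarrow> y \<in> UI \<Longrightarrow> \<bar>u x y - w' x y\<bar> \<le> 1"
  shows "bdd_above {\<bar>LINT x:S|lebesgue. LINT y:T|lebesgue. (u x y - w' x y)\<bar> | S T.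
       S \<in> sets lebesgue \<and> S \<subseteq> {0..1} \<and> T \<in> sets lebesgue \<and> T \<subseteq> {0..1}}"
proof (rule bdd_aboveI[where M=1], clarify)
  fix S T :: "real set"
  assume S: "S \<in> sets lebesgue" "S \<subseteq> UI" and T: "T \<in> sets lebesgue" "T \<subseteq> UI"
  show "\<bar>LINT x:S|lebesgue. LINT y:T|lebesgue. (u x y - w' x y)\<bar> \<le> 1"
  proof (rule lint_abs_le[OF S])
    fix x assume "x \<in> S"
    then show "\<bar>LINT y:T|lebesgue. (u x y - w' x y)\<bar> \<le> 1"
      by (intro lint_abs_le[OF T] assms) (use S T in auto)
  qed
qed

lemma cut_le:
  fixes u w' :: "real \<Rightarrow> real \<Rightarrow> real"
  assumes "\<And>x y. x \<in> UI \<Longrightarrow> y \<in> UI \<Longrightarrow> \<bar>u x y - w' x y\<bar> \<le> 1"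
    and S: "S \<in> sets lebesgue" "S \<subseteq> UI" and T: "T \<in> sets lebesgue" "T \<subseteq> UI"
  shows "\<bar>LINT x:S|lebesgue. LINT y:T|lebesgue. (u x y - w' x y)\<bar> \<le> cut_norm_dist u w'"
  unfolding cut_norm_dist_def
  by (rule cSup_upper[OF _ cut_bdd[OF assms(1)]]) (use S T in blast)

lemma cut_nonneg:
  fixes u w' :: "real \<Rightarrow> real \<Rightarrow> real"
  assumes "\<And>x y. x \<in> UI \<Longrightarrow> y \<in> UI \<Longrightarrow> \<bar>u x y - w' x y\<bar> \<le> 1"
  shows "0 \<le> cut_norm_dist u w'"
proof -
  have "\<bar>LINT x:{}|lebesgue. LINT y:{}|lebesgue. (u x y - w' x y)\<bar> \<le> cut_norm_dist u w'"
    by (rule cut_le[OF assms]) auto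
  then show ?thesis by simp
qed

lemma sub_bound:
  fixes f :: "real \<Rightarrow> real"
  assumes f: "f \<in> borel_measurable (lebesgue_on UI)" and b: "\<And>y. y \<in> UI \<Longrightarrow> 0 \<le> f y \<and> f y \<le> 1"
    and A: "A \<in> sets lebesgue" "A \<subseteq> UI" and L: "L \<in> sets lebesgue" "L \<subseteq> A"
  shows "integral\<^sup>L (lebesgue_on UI) (\<lambda>y. indicator A y * f y)
     \<le> integral\<^sup>L (lebesgue_on UI) (\<lambda>y. indicator L y * f y) + measure (lebesgue_on UI) (A - L)"
proof -
  let ?M = "lebesgue_on UI"
  have LU: "L \<subseteq> UI" using L A by auto
  have D: "A - L \<in> sets lebesgue" "A - L \<subseteq> UI" using A L by auto
  have mL: "(\<lambda>y. indicator L y * f y) \<in> borel_measurable ?M"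
    by (intro borel_measurable_times K_meas[OF L(1) LU] f)
  have mD: "(\<lambda>y. indicator (A - L) y * f y) \<in> borel_measurable ?M"
    by (intro borel_measurable_times K_meas[OF D] f)
  have iL: "integrable ?M (\<lambda>y. indicator L y * f y)"
    by (rule integrable_M_bnd[OF mL, where B=1]) (use b in \<open>auto simp: indicator_def\<close>)
  have iD: "integrable ?M (\<lambda>y. indicator (A - L) y * f y)"
    by (rule integrable_M_bnd[OF mD, where B=1]) (use b in \<open>auto simp: indicator_def\<close>)
  have "integral\<^sup>L ?M (\<lambda>y. indicator A y * f y)
      = integral\<^sup>L ?M (\<lambda>y. indicator L y * f y + indicator (A - L) y * f y)"
    using L by (intro Bochner_Integration.integral_cong) (auto simp: indicator_def)
  also have "\<dots> = integral\<^sup>L ?M (\<lambda>y. indicator L y * f y) + integral\<^sup>L ?M (\<lambda>y. indicator (A - L) y * f y)"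
    by (rule Bochner_Integration.integral_add[OF iL iD])
  also have "integral\<^sup>L ?M (\<lambda>y. indicator (A - L) y * f y) \<le> integral\<^sup>L ?M (indicator (A - L))"
  proof (rule integral_mono)
    show "integrable ?M (indicator (A - L) :: real \<Rightarrow> real)"
      by (rule integrable_M_bnd[OF K_meas[OF D], where B=1]) (auto simp: indicator_def)
  qed (use iD b D in \<open>auto simp: indicator_def\<close>)
  also have "integral\<^sup>L ?M (indicator (A - L) :: real \<Rightarrow> real) = measure ?M (A - L)"
    using D by (simp add: integral_indicator Int_absorb2)
  finally show ?thesis by simp
qed

lemma pos_iff:
  assumes "A \<in> sets lebesgue" "A \<subseteq> UI"
  shows "emeasure lebesgue A > 0 \<longleftrightarrow> measure lebesgue A > 0"
proof -
  have "emeasure lebesgue A \<le> emeasure lebesgue UI" using assms by (intro emeasure_mono) auto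
  then have "emeasure lebesgue A \<noteq> \<infinity>" by (auto simp: top_unique)
  then show ?thesis by (simp add: emeasure_eq_ennreal_measure measure_nonneg)
qed



lemma deg_abs:
  assumes gw: "graphon w" and z: "z \<in> UI" and K: "K \<in> sets lebesgue" "K \<subseteq> UI"
  shows "\<bar>deg_on w K z\<bar> \<le> 1"
  unfolding deg_on_def
proof (rule lint_abs_le[OF K])
  fix y assume "y \<in> K"
  then have "y \<in> UI" using K by auto
  then show "\<bar>w z y\<bar> \<le> 1" using graphon_bnd[OF gw z] by (auto simp: abs_le_iff)
qed

lemma mp_id: "measure_preserving_unit (\<lambda>x. x)"
  unfolding measure_preserving_unit_def
proof
  show "(\<lambda>x. x) \<in> lebesgue_on UI \<rightarrow>\<^sub>M lebesgue_on UI" by simp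
  show "\<forall>A. A \<in> sets lebesgue \<and> A \<subseteq> UI \<longrightarrow> emeasure lebesgue ((\<lambda>x. x) -` A \<inter> UI) = emeasure lebesgue A"
    by (auto simp: Int_absorb2)
qed

lemma null_UI_sets: "N \<in> null_sets lebesgue \<Longrightarrow> N \<inter> UI \<in> sets lebesgue"
  by auto

lemma mp_null:
  assumes mp: "measure_preserving_unit \<sigma>" and N: "N \<in> null_sets lebesgue"
  shows "\<sigma> -` (N \<inter> UI) \<inter> UI \<in> null_sets lebesgue"
proof -
  have s: "N \<inter> UI \<in> sets lebesgue" using N by auto
  have "emeasure lebesgue (\<sigma> -` (N \<inter> UI) \<inter> UI) = emeasure lebesgue (N \<inter> UI)"
    using mp_pre_emeasure[OF mp s] by simp
  also have "\<dots> = 0" using null_set_Int2[OF N UI_sets] by auto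
  finally show ?thesis using mp_pre_sets[OF mp s] by (simp add: null_sets_def)
qed

lemma measure_null_M: "N \<in> null_sets lebesgue \<Longrightarrow> measure (lebesgue_on UI) (N \<inter> UI) = 0"
proof -
  assume N: "N \<in> null_sets lebesgue"
  have "N \<inter> UI \<in> null_sets lebesgue" using null_set_Int2[OF N UI_sets] .
  then show ?thesis by (subst measure_M) (auto simp: sets_M_iff measure_eq_0_null_sets)
qed

lemma core_measure_ge:
  fixes w :: "real \<Rightarrow> real \<Rightarrow> real"
  assumes gw: "graphon w" and gr: "greg w g N" and pos: "0 < emeasure lebesgue (core \<kappa> w)"
  shows "\<kappa> \<le> measure lebesgue (core \<kappa> w)"
proof -
  have C: "core \<kappa> w \<in> sets lebesgue" "core \<kappa> w \<subseteq> UI" using core_sets[OF gr] core_sub by auto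
  have N: "N \<in> null_sets lebesgue" using gr by (simp add: greg_def)
  have "\<not> core \<kappa> w \<subseteq> N"
  proof
    assume "core \<kappa> w \<subseteq> N"
    then have "emeasure lebesgue (core \<kappa> w) \<le> emeasure lebesgue N" using N by (intro emeasure_mono) auto
    then show False using pos N by auto
  qed
  then obtain x where x: "x \<in> core \<kappa> w" "x \<notin> N" by auto
  have xU: "x \<in> UI" using x C by auto
  have wm: "w x \<in> borel_measurable (lebesgue_on UI)" using greg_good[OF gr] x xU by auto
  have "\<kappa> \<le> deg_on w (core \<kappa> w) x" by (rule core_fix[OF gw gr x(1) wm])
  also have "\<dots> = integral\<^sup>L (lebesgue_on UI) (\<lambda>y. indicator (core \<kappa> w) y * w x y)" by (rule deg_M[OF C])
  also have "\<dots> \<le> integral\<^sup>L (lebesgue_on UI) (\<lambda>y. indicator {} y * w x y) + measure (lebesgue_on UI) (core \<kappa> w - {})"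
    by (rule sub_bound[OF wm _ C]) (use graphon_bnd[OF gw] xU in auto)
  also have "\<dots> = measure lebesgue (core \<kappa> w)" using C by (simp add: measure_M sets_M_iff)
  finally show ?thesis .
qed

lemma cut_split:
  fixes u w' :: "real \<Rightarrow> real \<Rightarrow> real" and F :: "real \<Rightarrow> real"
  assumes S: "S \<in> sets lebesgue" "S \<subseteq> UI" and F: "F \<in> borel_measurable (lebesgue_on UI)"
    and ae: "AE x in lebesgue_on UI. x \<in> S \<longrightarrow> (LINT y:T|lebesgue. (u x y - w' x y)) = F x"
  shows "(LINT x:S|lebesgue. LINT y:T|lebesgue. (u x y - w' x y)) = integral\<^sup>L (lebesgue_on UI) (\<lambda>x. indicator S x * F x)"
proof -
  have mF: "(\<lambda>x. indicator S x * F x) \<in> borel_measurable (lebesgue_on UI)"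
    by (intro borel_measurable_times K_meas[OF S] F)
  have ae2: "AE x in lebesgue_on UI. indicator S x * (LINT y:T|lebesgue. (u x y - w' x y)) = indicator S x * F x"
    using ae by eventually_elim (auto simp: indicator_def)
  have m: "(\<lambda>x. indicator S x * (LINT y:T|lebesgue. (u x y - w' x y))) \<in> borel_measurable (lebesgue_on UI)"
    by (rule M_AE_measurable[OF mF ae2])
  show ?thesis unfolding lint_M[OF S]
    by (rule integral_cong_AE[OF m mF ae2])
qed

lemma inner_eq:
  fixes w w' :: "real \<Rightarrow> real \<Rightarrow> real"
  assumes mp: "measure_preserving_unit \<sigma>" and gw: "graphon w" and gw': "graphon w'"
    and T: "T \<in> sets lebesgue" "T \<subseteq> UI" and xU: "x \<in> UI"
    and g1: "w (\<sigma> x) \<in> borel_measurable (lebesgue_on UI)" and g2: "w' x \<in> borel_measurable (lebesgue_on UI)"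
  shows "(LINT y:T|lebesgue. (w (\<sigma> x) (\<sigma> y) - w' x y))
     = integral\<^sup>L (lebesgue_on UI) (\<lambda>y. indicator T y * w (\<sigma> x) (\<sigma> y)) - deg_on w' T x"
proof -
  let ?M = "lebesgue_on UI"
  have m1: "(\<lambda>y. indicator T y * w (\<sigma> x) (\<sigma> y)) \<in> borel_measurable ?M"
    by (intro borel_measurable_times K_meas[OF T] mp_comp[OF mp g1])
  have m2: "(\<lambda>y. indicator T y * w' x y) \<in> borel_measurable ?M"
    by (intro borel_measurable_times K_meas[OF T] g2)
  have i1: "integrable ?M (\<lambda>y. indicator T y * w (\<sigma> x) (\<sigma> y))"
    by (rule integrable_M_bnd[OF m1, where B=1])
       (use graphon_bnd[OF gw] mp_UI[OF mp] xU in \<open>auto simp: indicator_def\<close>)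
  have i2: "integrable ?M (\<lambda>y. indicator T y * w' x y)"
    by (rule integrable_M_bnd[OF m2, where B=1])
       (use graphon_bnd[OF gw'] xU in \<open>auto simp: indicator_def\<close>)
  have "(LINT y:T|lebesgue. (w (\<sigma> x) (\<sigma> y) - w' x y))
      = integral\<^sup>L ?M (\<lambda>y. indicator T y * w (\<sigma> x) (\<sigma> y) - indicator T y * w' x y)"
    unfolding lint_M[OF T] by (simp add: algebra_simps)
  also have "\<dots> = integral\<^sup>L ?M (\<lambda>y. indicator T y * w (\<sigma> x) (\<sigma> y)) - integral\<^sup>L ?M (\<lambda>y. indicator T y * w' x y)"
    by (rule Bochner_Integration.integral_diff[OF i1 i2])
  finally show ?thesis by (simp add: deg_M[OF T])
qed

lemma graphon_diff_bnd:
  assumes "graphon w" "graphon w'" "measure_preserving_unit \<sigma>"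
  shows "\<And>x y. x \<in> UI \<Longrightarrow> y \<in> UI \<Longrightarrow> \<bar>w (\<sigma> x) (\<sigma> y) - w' x y\<bar> \<le> 1"
  using graphon_bnd[OF assms(1)] graphon_bnd[OF assms(2)] mp_UI[OF assms(3)]
  by (simp add: abs_le_iff) (smt (verit))



lemma dir1:
  fixes w w' :: "real \<Rightarrow> real \<Rightarrow> real"
  assumes gw: "graphon w" and gw': "graphon w'" and mp: "measure_preserving_unit \<sigma>"
    and gr: "greg w g N" and gr': "greg w' g' N'"
    and ce: "cut_norm_dist (\<lambda>x y. w (\<sigma> x) (\<sigma> y)) w' < e"
    and kpos: "0 < emeasure lebesgue (core \<kappa> w)" and kl: "2 * sqrt e < \<kappa>"
  shows "0 < emeasure lebesgue (core (\<kappa> - 2 * sqrt e) w')"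
proof -
  let ?M = "lebesgue_on UI"
  define s where "s = sqrt e"
  have c0: "0 \<le> cut_norm_dist (\<lambda>x y. w (\<sigma> x) (\<sigma> y)) w'"
    by (rule cut_nonneg) (rule graphon_diff_bnd[OF gw gw' mp])
  have e0: "0 < e" using c0 ce by linarith
  have s0: "0 < s" and ss: "s * s = e" using e0 by (auto simp: s_def)
  have N: "N \<in> null_sets lebesgue" and N': "N' \<in> null_sets lebesgue" using gr gr' by (auto simp: greg_def)
  define K where "K = core \<kappa> w"
  have K: "K \<in> sets lebesgue" "K \<subseteq> UI" unfolding K_def using core_sets[OF gr] core_sub by auto
  define Kt where "Kt = \<sigma> -` K \<inter> UI"
  have Kt: "Kt \<in> sets lebesgue" "Kt \<subseteq> UI" unfolding Kt_def using mp_pre_sets[OF mp K] by auto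
  have muKt: "measure lebesgue Kt = measure lebesgue K"
    unfolding Kt_def measure_def using mp_pre_emeasure[OF mp K] by simp
  have muK: "\<kappa> \<le> measure lebesgue K" unfolding K_def by (rule core_measure_ge[OF gw gr kpos[folded K_def, unfolded K_def]])
  define F1 where "F1 x = deg_on w K (\<sigma> x)" for x
  define F2 where "F2 = deg_on w' Kt"
  have mF1: "F1 \<in> borel_measurable ?M" unfolding F1_def by (rule mp_comp[OF mp greg_deg_meas[OF gr K]])
  have mF2: "F2 \<in> borel_measurable ?M" unfolding F2_def by (rule greg_deg_meas[OF gr' Kt])
  have bF1: "\<bar>F1 x\<bar> \<le> 1" if "x \<in> UI" for x unfolding F1_def by (rule deg_abs[OF gw mp_UI[OF mp that] K])
  have bF2: "\<bar>F2 x\<bar> \<le> 1" if "x \<in> UI" for x unfolding F2_def by (rule deg_abs[OF gw' that Kt])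
  define B where "B = {x \<in> Kt. F2 x < \<kappa> - s}"
  have "{x \<in> space ?M. F2 x < \<kappa> - s} \<in> sets ?M" using mF2 by measurable
  then have "{x \<in> UI. F2 x < \<kappa> - s} \<in> sets lebesgue" by (simp add: sets_M_iff)
  moreover have "B = Kt \<inter> {x \<in> UI. F2 x < \<kappa> - s}" using Kt by (auto simp: B_def)
  ultimately have B: "B \<in> sets lebesgue" "B \<subseteq> UI" using Kt by auto
  define N0 where "N0 = N' \<union> (\<sigma> -` (N \<inter> UI) \<inter> UI)"
  have N0: "N0 \<in> null_sets lebesgue" unfolding N0_def using N' mp_null[OF mp N] by auto
  have good: "w' x \<in> borel_measurable ?M \<and> w (\<sigma> x) \<in> borel_measurable ?M" if "x \<in> UI" "x \<notin> N0" for x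
  proof -
    have "x \<in> UI - N'" "\<sigma> x \<in> UI - N" using that mp_UI[OF mp] by (auto simp: N0_def)
    then show ?thesis using greg_good[OF gr] greg_good[OF gr'] by auto
  qed
  have inner: "(LINT y:Kt|lebesgue. (w (\<sigma> x) (\<sigma> y) - w' x y)) = F1 x - F2 x" if "x \<in> UI" "x \<notin> N0" for x
  proof -
    have g1: "w (\<sigma> x) \<in> borel_measurable ?M" and g2: "w' x \<in> borel_measurable ?M" using good[OF that] by auto
    have "integral\<^sup>L ?M (\<lambda>y. indicator Kt y * w (\<sigma> x) (\<sigma> y)) = F1 x"
      unfolding F1_def Kt_def deg_M[OF K] using change_var[OF mp g1 K] by simp
    then show ?thesis using inner_eq[OF mp gw gw' Kt that(1) g1 g2] by (simp add: F2_def)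
  qed
  have F1ge: "\<kappa> \<le> F1 x" if "x \<in> Kt" "x \<notin> N0" for x
  proof -
    have xU: "x \<in> UI" using that Kt by auto
    have "\<sigma> x \<in> core \<kappa> w" using that by (auto simp: Kt_def K_def)
    then show ?thesis unfolding F1_def K_def using core_fix[OF gw gr] good[OF xU that(2)] by blast
  qed
  define E where "E = (LINT x:B|lebesgue. LINT y:Kt|lebesgue. (w (\<sigma> x) (\<sigma> y) - w' x y))"
  have aeN0: "AE x in ?M. x \<notin> N0" by (rule nullM[OF N0])
  have E_eq: "E = integral\<^sup>L ?M (\<lambda>x. indicator B x * (F1 x - F2 x))"
    unfolding E_def
  proof (rule cut_split[OF B])
    show "(\<lambda>x. F1 x - F2 x) \<in> borel_measurable ?M" using mF1 mF2 by auto
    show "AE x in ?M. x \<in> B \<longrightarrow> (LINT y:Kt|lebesgue. (w (\<sigma> x) (\<sigma> y) - w' x y)) = F1 x - F2 x"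
      using aeN0 AE_UI by eventually_elim (use inner in auto)
  qed
  have mB: "indicator B \<in> borel_measurable ?M" by (rule K_meas[OF B])
  have "s * measure ?M B = integral\<^sup>L ?M (\<lambda>x. indicator B x * s)"
    using B by (simp add: integral_indicator Int_absorb2 mult.commute)
  also have "\<dots> \<le> integral\<^sup>L ?M (\<lambda>x. indicator B x * (F1 x - F2 x))"
  proof (rule integral_mono_AE)
    show "integrable ?M (\<lambda>x. indicator B x * s)"
    proof (rule integrable_M_bnd[where B=s])
      show "(\<lambda>x. indicator B x * s) \<in> borel_measurable ?M" by (intro borel_measurable_times mB borel_measurable_const)
    qed (use s0 in \<open>auto simp: indicator_def\<close>)
    have m: "(\<lambda>x. indicator B x * (F1 x - F2 x)) \<in> borel_measurable ?M"
      by (intro borel_measurable_times borel_measurable_diff mB mF1 mF2)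
    show "integrable ?M (\<lambda>x. indicator B x * (F1 x - F2 x))"
    proof (rule integrable_M_bnd[OF m, where B=2])
      fix x assume "x \<in> UI"
      then show "\<bar>indicator B x * (F1 x - F2 x)\<bar> \<le> 2" using bF1 bF2 by (auto simp: indicator_def abs_le_iff) (smt (verit))+
    qed
    show "AE x in ?M. indicator B x * s \<le> indicator B x * (F1 x - F2 x)"
      using aeN0 AE_UI
    proof eventually_elim
      case (elim x)
      show ?case
      proof (cases "x \<in> B")
        case True
        then have "x \<in> Kt" "F2 x < \<kappa> - s" by (auto simp: B_def)
        with F1ge[of x] elim show ?thesis using True by auto
      qed simp
    qed
  qed
  also have "\<dots> = E" by (rule E_eq[symmetric])
  also have "E \<le> \<bar>E\<bar>" by simp
  also have "\<bar>E\<bar> \<le> cut_norm_dist (\<lambda>x y. w (\<sigma> x) (\<sigma> y)) w'"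
    unfolding E_def by (rule cut_le[OF graphon_diff_bnd[OF gw gw' mp] B Kt])
  finally have "s * measure ?M B < s * s" using ce ss by linarith
  then have muB: "measure ?M B < s" using s0 by simp
  define L where "L = Kt - B - N0"
  have N0s: "N0 \<in> sets lebesgue" using N0 by auto
  have L: "L \<in> sets lebesgue" "L \<subseteq> UI" using Kt B N0s by (auto simp: L_def)
  have Lsub: "L \<subseteq> Kt" by (auto simp: L_def)
  have diffle: "measure ?M (Kt - L) \<le> measure ?M B"
  proof -
    have "Kt - L \<subseteq> B \<union> (N0 \<inter> UI)" using Kt by (auto simp: L_def)
    then have "measure ?M (Kt - L) \<le> measure ?M (B \<union> (N0 \<inter> UI))"
      using B N0s by (intro MM.finite_measure_mono) (auto simp: sets_M_iff)
    also have "\<dots> \<le> measure ?M B + measure ?M (N0 \<inter> UI)"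
      using B N0s by (intro measure_Un_le) (auto simp: sets_M_iff)
    also have "measure ?M (N0 \<inter> UI) = 0" by (rule measure_null_M[OF N0])
    finally show ?thesis by simp
  qed
  have Lcore: "(\<lambda>x. x) ` L \<subseteq> core (\<kappa> - 2 * s) w'"
  proof (rule core_contain[OF mp_id gw' gr' L])
    fix x assume xL: "x \<in> L"
    then have xU: "x \<in> UI" "x \<notin> N0" "x \<in> Kt" "x \<notin> B" using L by (auto simp: L_def)
    have g2: "w' x \<in> borel_measurable ?M" using good[OF xU(1,2)] by auto
    have "\<kappa> - s \<le> F2 x" using xU by (auto simp: B_def)
    also have "F2 x \<le> integral\<^sup>L ?M (\<lambda>y. indicator L y * w' x y) + measure ?M (Kt - L)"
      unfolding F2_def deg_M[OF Kt]
      by (rule sub_bound[OF g2 _ Kt L(1) Lsub]) (use graphon_bnd[OF gw' xU(1)] in auto)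
    finally have "\<kappa> - 2 * s \<le> integral\<^sup>L ?M (\<lambda>y. indicator L y * w' x y)"
      using diffle muB by linarith
    then show "w' ((\<lambda>x. x) x) \<in> borel_measurable ?M \<and>
        \<kappa> - 2 * s \<le> integral\<^sup>L ?M (\<lambda>y. indicator L y * w' ((\<lambda>x. x) x) ((\<lambda>x. x) y))"
      using g2 by simp
  qed
  have "measure ?M Kt \<le> measure ?M L + measure ?M (Kt - L)"
  proof -
    have "measure ?M Kt \<le> measure ?M (L \<union> (Kt - L))"
      using Kt L by (intro MM.finite_measure_mono) (auto simp: sets_M_iff)
    also have "\<dots> \<le> measure ?M L + measure ?M (Kt - L)"
      using Kt L by (intro measure_Un_le) (auto simp: sets_M_iff)
    finally show ?thesis .
  qed
  moreover have "measure ?M Kt = measure lebesgue K" using Kt muKt by (simp add: measure_M sets_M_iff)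
  ultimately have "0 < measure ?M L" using muK muB diffle kl s_def s0 by linarith
  then have "0 < measure lebesgue L" using L by (simp add: measure_M sets_M_iff)
  then have Lpos: "0 < emeasure lebesgue L" using pos_iff[OF L] by simp
  have "emeasure lebesgue L \<le> emeasure lebesgue (core (\<kappa> - 2 * s) w')"
    using Lcore core_sets[OF gr'] by (intro emeasure_mono) auto
  then show ?thesis using Lpos s_def by simp
qed



lemma mp_borel: "measure_preserving_unit \<sigma> \<Longrightarrow> \<sigma> \<in> borel_measurable (lebesgue_on UI)"
  using measurable_comp[OF mp_meas borel_to_M[of "\<lambda>z. z"]] by (simp add: o_def)

lemma F1_meas:
  fixes w :: "real \<Rightarrow> real \<Rightarrow> real"
  assumes mp: "measure_preserving_unit \<sigma>" and gw: "graphon w" and gr: "greg w g N"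
    and K: "K \<in> sets lebesgue" "K \<subseteq> UI"
  shows "(\<lambda>x. integral\<^sup>L (lebesgue_on UI) (\<lambda>y. indicator K y * w (\<sigma> x) (\<sigma> y))) \<in> borel_measurable (lebesgue_on UI)"
proof (rule M_AE_measurable)
  let ?M = "lebesgue_on UI"
  have g: "g \<in> borel_measurable borel" and N: "N \<in> null_sets lebesgue"
    and ae: "\<And>x. x \<in> UI - N \<Longrightarrow> AE y in ?M. w x y = g (x, y)" using gr by (auto simp: greg_def)
  have sb: "\<sigma> \<in> borel_measurable ?M" by (rule mp_borel[OF mp])
  have "(\<lambda>z. indicator K (snd z) * g (\<sigma> (fst z), \<sigma> (snd z))) \<in> borel_measurable (?M \<Otimes>\<^sub>M ?M)"
  proof (rule borel_measurable_times)
    show "(\<lambda>z. indicator K (snd z)) \<in> borel_measurable (?M \<Otimes>\<^sub>M ?M)"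
      using measurable_comp[OF measurable_snd K_meas[OF K]] by (simp add: o_def)
    have a: "(\<lambda>z. \<sigma> (fst z)) \<in> borel_measurable (?M \<Otimes>\<^sub>M ?M)"
      using measurable_comp[OF measurable_fst sb] by (simp add: o_def)
    have b: "(\<lambda>z. \<sigma> (snd z)) \<in> borel_measurable (?M \<Otimes>\<^sub>M ?M)"
      using measurable_comp[OF measurable_snd sb] by (simp add: o_def)
    show "(\<lambda>z. g (\<sigma> (fst z), \<sigma> (snd z))) \<in> borel_measurable (?M \<Otimes>\<^sub>M ?M)"
      by (rule borel_pair_M[OF g a b])
  qed
  then have "case_prod (\<lambda>x y. indicator K y * g (\<sigma> x, \<sigma> y)) \<in> borel_measurable (?M \<Otimes>\<^sub>M ?M)"
    by (simp add: case_prod_beta')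
  from MM.borel_measurable_lebesgue_integral[OF this]
  show "(\<lambda>x. integral\<^sup>L ?M (\<lambda>y. indicator K y * g (\<sigma> x, \<sigma> y))) \<in> borel_measurable ?M" .
  have aeN: "AE x in ?M. x \<notin> \<sigma> -` (N \<inter> UI) \<inter> UI" by (rule nullM[OF mp_null[OF mp N]])
  show "AE x in ?M. integral\<^sup>L ?M (\<lambda>y. indicator K y * w (\<sigma> x) (\<sigma> y)) = integral\<^sup>L ?M (\<lambda>y. indicator K y * g (\<sigma> x, \<sigma> y))"
    using aeN AE_UI
  proof eventually_elim
    case (elim x)
    then have sx: "\<sigma> x \<in> UI - N" using mp_UI[OF mp] by auto
    have aex: "AE z in ?M. w (\<sigma> x) z = g (\<sigma> x, z)" using ae[OF sx] .
    have wm: "w (\<sigma> x) \<in> borel_measurable ?M" by (rule reg_meas[where w=w and x="\<sigma> x", OF g aex])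
    have gm: "(\<lambda>z. g (\<sigma> x, z)) \<in> borel_measurable ?M"
      by (rule borel_pair_M[OF g]) (auto intro: borel_to_M)
    have P: "{z \<in> space ?M. w (\<sigma> x) z = g (\<sigma> x, z)} \<in> sets ?M"
      using wm gm by measurable
    have "AE z in distr ?M ?M \<sigma>. w (\<sigma> x) z = g (\<sigma> x, z)" by (subst mp_distr[OF mp]) (rule aex)
    then have aey: "AE y in ?M. w (\<sigma> x) (\<sigma> y) = g (\<sigma> x, \<sigma> y)"
      using AE_distr_iff[OF mp_meas[OF mp] P] by simp
    show ?case
    proof (rule integral_cong_AE)
      show "(\<lambda>y. indicator K y * w (\<sigma> x) (\<sigma> y)) \<in> borel_measurable ?M"
        by (intro borel_measurable_times K_meas[OF K] mp_comp[OF mp wm])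
      show "(\<lambda>y. indicator K y * g (\<sigma> x, \<sigma> y)) \<in> borel_measurable ?M"
        by (intro borel_measurable_times K_meas[OF K] mp_comp[OF mp gm])
      show "AE y in ?M. indicator K y * w (\<sigma> x) (\<sigma> y) = indicator K y * g (\<sigma> x, \<sigma> y)"
        using aey by eventually_elim simp
    qed
  qed
qed



lemma dir2:
  fixes w w' :: "real \<Rightarrow> real \<Rightarrow> real"
  assumes gw: "graphon w" and gw': "graphon w'" and mp: "measure_preserving_unit \<sigma>"
    and gr: "greg w g N" and gr': "greg w' g' N'"
    and ce: "cut_norm_dist (\<lambda>x y. w (\<sigma> x) (\<sigma> y)) w' < e"
    and kpos: "0 < emeasure lebesgue (core \<kappa> w')" and kl: "2 * sqrt e < \<kappa>"
  shows "0 < emeasure lebesgue (core (\<kappa> - 2 * sqrt e) w)"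
proof -
  let ?M = "lebesgue_on UI"
  define s where "s = sqrt e"
  have c0: "0 \<le> cut_norm_dist (\<lambda>x y. w (\<sigma> x) (\<sigma> y)) w'"
    by (rule cut_nonneg) (rule graphon_diff_bnd[OF gw gw' mp])
  have e0: "0 < e" using c0 ce by linarith
  have s0: "0 < s" and ss: "s * s = e" using e0 by (auto simp: s_def)
  have N: "N \<in> null_sets lebesgue" and N': "N' \<in> null_sets lebesgue" using gr gr' by (auto simp: greg_def)
  define K where "K = core \<kappa> w'"
  have K: "K \<in> sets lebesgue" "K \<subseteq> UI" unfolding K_def using core_sets[OF gr'] core_sub by auto
  have muK: "\<kappa> \<le> measure lebesgue K" unfolding K_def by (rule core_measure_ge[OF gw' gr' kpos])
  define F1 where "F1 x = integral\<^sup>L ?M (\<lambda>y. indicator K y * w (\<sigma> x) (\<sigma> y))" for x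
  define F2 where "F2 = deg_on w' K"
  have mF1: "F1 \<in> borel_measurable ?M" unfolding F1_def by (rule F1_meas[OF mp gw gr K])
  have mF2: "F2 \<in> borel_measurable ?M" unfolding F2_def by (rule greg_deg_meas[OF gr' K])
  have bF1: "\<bar>F1 x\<bar> \<le> 1" if "x \<in> UI" for x unfolding F1_def
    by (rule int_abs_le) (use graphon_bnd[OF gw] mp_UI[OF mp] that in \<open>auto simp: indicator_def\<close>)
  have bF2: "\<bar>F2 x\<bar> \<le> 1" if "x \<in> UI" for x unfolding F2_def by (rule deg_abs[OF gw' that K])
  define B where "B = {x \<in> K. F1 x < \<kappa> - s}"
  have "{x \<in> space ?M. F1 x < \<kappa> - s} \<in> sets ?M" using mF1 by measurable
  then have "{x \<in> UI. F1 x < \<kappa> - s} \<in> sets lebesgue" by (simp add: sets_M_iff)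
  moreover have "B = K \<inter> {x \<in> UI. F1 x < \<kappa> - s}" using K by (auto simp: B_def)
  ultimately have B: "B \<in> sets lebesgue" "B \<subseteq> UI" using K by auto
  define N0 where "N0 = N' \<union> (\<sigma> -` (N \<inter> UI) \<inter> UI)"
  have N0: "N0 \<in> null_sets lebesgue" unfolding N0_def using N' mp_null[OF mp N] by auto
  have good: "w' x \<in> borel_measurable ?M \<and> w (\<sigma> x) \<in> borel_measurable ?M" if "x \<in> UI" "x \<notin> N0" for x
  proof -
    have "x \<in> UI - N'" "\<sigma> x \<in> UI - N" using that mp_UI[OF mp] by (auto simp: N0_def)
    then show ?thesis using greg_good[OF gr] greg_good[OF gr'] by auto
  qed
  have inner: "(LINT y:K|lebesgue. (w (\<sigma> x) (\<sigma> y) - w' x y)) = F1 x - F2 x" if "x \<in> UI" "x \<notin> N0" for x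
  proof -
    have g1: "w (\<sigma> x) \<in> borel_measurable ?M" and g2: "w' x \<in> borel_measurable ?M" using good[OF that] by auto
    show ?thesis using inner_eq[OF mp gw gw' K that(1) g1 g2] by (simp add: F1_def F2_def)
  qed
  have F2ge: "\<kappa> \<le> F2 x" if "x \<in> K" "x \<notin> N0" for x
  proof -
    have xU: "x \<in> UI" using that K by auto
    show ?thesis unfolding F2_def K_def using core_fix[OF gw' gr'] that[unfolded K_def] good[OF xU that(2)] by blast
  qed
  define E where "E = (LINT x:B|lebesgue. LINT y:K|lebesgue. (w (\<sigma> x) (\<sigma> y) - w' x y))"
  have aeN0: "AE x in ?M. x \<notin> N0" by (rule nullM[OF N0])
  have E_eq: "E = integral\<^sup>L ?M (\<lambda>x. indicator B x * (F1 x - F2 x))"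
    unfolding E_def
  proof (rule cut_split[OF B])
    show "(\<lambda>x. F1 x - F2 x) \<in> borel_measurable ?M" using mF1 mF2 by auto
    show "AE x in ?M. x \<in> B \<longrightarrow> (LINT y:K|lebesgue. (w (\<sigma> x) (\<sigma> y) - w' x y)) = F1 x - F2 x"
      using aeN0 AE_UI by eventually_elim (use inner in auto)
  qed
  have mB: "indicator B \<in> borel_measurable ?M" by (rule K_meas[OF B])
  have "integral\<^sup>L ?M (\<lambda>x. indicator B x * (F1 x - F2 x)) \<le> integral\<^sup>L ?M (\<lambda>x. indicator B x * (- s))"
  proof (rule integral_mono_AE)
    show "integrable ?M (\<lambda>x. indicator B x * (- s))"
    proof (rule integrable_M_bnd[where B=s])
      show "(\<lambda>x. indicator B x * (- s)) \<in> borel_measurable ?M" by (intro borel_measurable_times mB borel_measurable_const)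
    qed (use s0 in \<open>auto simp: indicator_def\<close>)
    have m: "(\<lambda>x. indicator B x * (F1 x - F2 x)) \<in> borel_measurable ?M"
      by (intro borel_measurable_times borel_measurable_diff mB mF1 mF2)
    show "integrable ?M (\<lambda>x. indicator B x * (F1 x - F2 x))"
    proof (rule integrable_M_bnd[OF m, where B=2])
      fix x assume "x \<in> UI"
      then show "\<bar>indicator B x * (F1 x - F2 x)\<bar> \<le> 2" using bF1 bF2 by (auto simp: indicator_def abs_le_iff) (smt (verit))+
    qed
    show "AE x in ?M. indicator B x * (F1 x - F2 x) \<le> indicator B x * (- s)"
      using aeN0 AE_UI
    proof eventually_elim
      case (elim x)
      show ?case
      proof (cases "x \<in> B")
        case True
        then have "x \<in> K" "F1 x < \<kappa> - s" by (auto simp: B_def)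
        with F2ge[of x] elim show ?thesis using True by auto
      qed simp
    qed
  qed
  also have "\<dots> = - (s * measure ?M B)"
    using B by (simp add: integral_indicator Int_absorb2 mult.commute)
  finally have "s * measure ?M B \<le> - E" using E_eq by linarith
  also have "- E \<le> \<bar>E\<bar>" by simp
  also have "\<bar>E\<bar> \<le> cut_norm_dist (\<lambda>x y. w (\<sigma> x) (\<sigma> y)) w'"
    unfolding E_def by (rule cut_le[OF graphon_diff_bnd[OF gw gw' mp] B K])
  finally have "s * measure ?M B < s * s" using ce ss by linarith
  then have muB: "measure ?M B < s" using s0 by simp
  define L where "L = K - B - N0"
  have N0s: "N0 \<in> sets lebesgue" using N0 by auto
  have L: "L \<in> sets lebesgue" "L \<subseteq> UI" using K B N0s by (auto simp: L_def)
  have Lsub: "L \<subseteq> K" by (auto simp: L_def)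
  have diffle: "measure ?M (K - L) \<le> measure ?M B"
  proof -
    have "K - L \<subseteq> B \<union> (N0 \<inter> UI)" using K by (auto simp: L_def)
    then have "measure ?M (K - L) \<le> measure ?M (B \<union> (N0 \<inter> UI))"
      using B N0s by (intro MM.finite_measure_mono) (auto simp: sets_M_iff)
    also have "\<dots> \<le> measure ?M B + measure ?M (N0 \<inter> UI)"
      using B N0s by (intro measure_Un_le) (auto simp: sets_M_iff)
    also have "measure ?M (N0 \<inter> UI) = 0" by (rule measure_null_M[OF N0])
    finally show ?thesis by simp
  qed
  have Lcore: "\<sigma> ` L \<subseteq> core (\<kappa> - 2 * s) w"
  proof (rule core_contain[OF mp gw gr L])
    fix x assume xL: "x \<in> L"
    then have xU: "x \<in> UI" "x \<notin> N0" "x \<in> K" "x \<notin> B" using L by (auto simp: L_def)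
    have g1: "w (\<sigma> x) \<in> borel_measurable ?M" using good[OF xU(1,2)] by auto
    have "\<kappa> - s \<le> F1 x" using xU by (auto simp: B_def)
    also have "F1 x \<le> integral\<^sup>L ?M (\<lambda>y. indicator L y * w (\<sigma> x) (\<sigma> y)) + measure ?M (K - L)"
      unfolding F1_def
      by (rule sub_bound[OF mp_comp[OF mp g1] _ K L(1) Lsub]) (use graphon_bnd[OF gw] mp_UI[OF mp] xU(1) in auto)
    finally have "\<kappa> - 2 * s \<le> integral\<^sup>L ?M (\<lambda>y. indicator L y * w (\<sigma> x) (\<sigma> y))"
      using diffle muB by linarith
    then show "w (\<sigma> x) \<in> borel_measurable ?M \<and>
        \<kappa> - 2 * s \<le> integral\<^sup>L ?M (\<lambda>y. indicator L y * w (\<sigma> x) (\<sigma> y))"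
      using g1 by simp
  qed
  have "measure ?M K \<le> measure ?M L + measure ?M (K - L)"
  proof -
    have "measure ?M K \<le> measure ?M (L \<union> (K - L))"
      using K L by (intro MM.finite_measure_mono) (auto simp: sets_M_iff)
    also have "\<dots> \<le> measure ?M L + measure ?M (K - L)"
      using K L by (intro measure_Un_le) (auto simp: sets_M_iff)
    finally show ?thesis .
  qed
  moreover have "measure ?M K = measure lebesgue K" using K by (simp add: measure_M sets_M_iff)
  ultimately have "0 < measure ?M L" using muK muB diffle kl s_def s0 by linarith
  then have "0 < measure lebesgue L" using L by (simp add: measure_M sets_M_iff)
  then have Lpos: "0 < emeasure lebesgue L" using pos_iff[OF L] by simp
  define C where "C = core (\<kappa> - 2 * s) w"
  have C: "C \<in> sets lebesgue" "C \<subseteq> UI" unfolding C_def using core_sets[OF gr] core_sub by auto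
  have "L \<subseteq> \<sigma> -` C \<inter> UI" using Lcore L by (auto simp: C_def)
  then have "emeasure lebesgue L \<le> emeasure lebesgue (\<sigma> -` C \<inter> UI)"
    using mp_pre_sets[OF mp C] by (intro emeasure_mono) auto
  also have "\<dots> = emeasure lebesgue C" by (rule mp_pre_emeasure[OF mp C])
  finally show ?thesis using Lpos s_def C_def by simp
qed



lemma core_zero: assumes gw: "graphon w" shows "core 0 w = UI"
proof -
  have "core_iter n 0 w = UI" for n
  proof (induction n)
    case 0 then show ?case by simp
  next
    case (Suc n)
    have "0 \<le> deg_on w UI x" if "x \<in> UI" for x
      unfolding deg_M[OF UI_sets order_refl]
      by (rule Bochner_Integration.integral_nonneg) (use graphon_bnd[OF gw that] in auto)
    then show ?case using Suc by (auto simp: core_iter_Suc core_step_def)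
  qed
  then show ?thesis by (simp add: core_eq)
qed

lemma deg_set_props:
  assumes gw: "graphon w"
  shows "0 \<in> {\<kappa> \<in> {0..1}. emeasure lebesgue (core \<kappa> w) > 0}"
    and "bdd_above {\<kappa> \<in> {0..1::real}. emeasure lebesgue (core \<kappa> w) > 0}"
    and "0 \<le> degeneracy w"
proof -
  show z: "0 \<in> {\<kappa> \<in> {0..1}. emeasure lebesgue (core \<kappa> w) > 0}" using core_zero[OF gw] by simp
  show b: "bdd_above {\<kappa> \<in> {0..1::real}. emeasure lebesgue (core \<kappa> w) > 0}"
    by (rule bdd_aboveI[where M=1]) auto
  show "0 \<le> degeneracy w" unfolding degeneracy_def by (rule cSup_upper[OF z b])
qed

lemma one_side:
  fixes w w' :: "real \<Rightarrow> real \<Rightarrow> real"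
  assumes gw: "graphon w" and gw': "graphon w'"
    and step: "\<And>\<kappa>. \<kappa> \<in> {0..1} \<Longrightarrow> 0 < emeasure lebesgue (core \<kappa> w) \<Longrightarrow> 2 * sqrt e < \<kappa> \<Longrightarrow>
        0 < emeasure lebesgue (core (\<kappa> - 2 * sqrt e) w')"
    and e0: "0 \<le> e"
  shows "degeneracy w \<le> degeneracy w' + 2 * sqrt e"
  unfolding degeneracy_def[of w]
proof (rule cSup_least)
  show "{\<kappa> \<in> {0..1}. 0 < emeasure lebesgue (core \<kappa> w)} \<noteq> {}" using deg_set_props(1)[OF gw] by blast
  fix \<kappa> assume k: "\<kappa> \<in> {\<kappa> \<in> {0..1}. 0 < emeasure lebesgue (core \<kappa> w)}"
  show "\<kappa> \<le> degeneracy w' + 2 * sqrt e"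
  proof (cases "2 * sqrt e < \<kappa>")
    case True
    have "\<kappa> - 2 * sqrt e \<in> {\<kappa> \<in> {0..1}. 0 < emeasure lebesgue (core \<kappa> w')}"
    proof -
      have s0: "0 \<le> sqrt e" using e0 by simp
      have "\<kappa> \<le> 1" using k by simp
      then have "\<kappa> - 2 * sqrt e \<le> 1" using s0 by linarith
      then show ?thesis using step[OF _ _ True] k True by auto
    qed
    then have "\<kappa> - 2 * sqrt e \<le> degeneracy w'"
      unfolding degeneracy_def by (rule cSup_upper[OF _ deg_set_props(2)[OF gw']])
    then show ?thesis by simp
  next
    case False
    then show ?thesis using deg_set_props(3)[OF gw'] by simp
  qed
qed

lemma per_sigma:
  fixes w w' :: "real \<Rightarrow> real \<Rightarrow> real"
  assumes gw: "graphon w" and gw': "graphon w'" and mp: "measure_preserving_unit \<sigma>"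
  shows "(\<bar>degeneracy w - degeneracy w'\<bar> / 2)\<^sup>2 \<le> cut_norm_dist (\<lambda>x y. w (\<sigma> x) (\<sigma> y)) w'"
proof -
  obtain g N where gr: "greg w g N" using greg_ex[OF gw] by blast
  obtain g' N' where gr': "greg w' g' N'" using greg_ex[OF gw'] by blast
  let ?c = "cut_norm_dist (\<lambda>x y. w (\<sigma> x) (\<sigma> y)) w'"
  let ?D = "\<bar>degeneracy w - degeneracy w'\<bar>"
  have c0: "0 \<le> ?c" by (rule cut_nonneg) (rule graphon_diff_bnd[OF gw gw' mp])
  have bound: "?D \<le> 2 * sqrt e" if e: "?c < e" for e
  proof -
    have e0: "0 \<le> e" using c0 e by linarith
    have "degeneracy w \<le> degeneracy w' + 2 * sqrt e"
      by (rule one_side[OF gw gw' _ e0]) (rule dir1[OF gw gw' mp gr gr' e], auto)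
    moreover have "degeneracy w' \<le> degeneracy w + 2 * sqrt e"
      by (rule one_side[OF gw' gw _ e0]) (rule dir2[OF gw gw' mp gr gr' e], auto)
    ultimately show ?thesis by linarith
  qed
  show ?thesis
  proof (rule ccontr)
    assume "\<not> (?D / 2)\<^sup>2 \<le> ?c"
    then have lt: "?c < (?D / 2)\<^sup>2" by simp
    define e where "e = (?c + (?D / 2)\<^sup>2) / 2"
    have ce: "?c < e" and el: "e < (?D / 2)\<^sup>2" using lt by (auto simp: e_def)
    have e0: "0 \<le> e" using c0 ce by linarith
    have "sqrt e < sqrt ((?D / 2)\<^sup>2)" by (rule real_sqrt_less_mono[OF el])
    also have "\<dots> = ?D / 2" by simp
    finally have "2 * sqrt e < ?D" by simp
    with bound[OF ce] show False by simp
  qed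
qed

theorem lemma6:
  fixes w w' :: "real \<Rightarrow> real \<Rightarrow> real"
  assumes "graphon w" and "graphon w'"
  shows "\<bar>degeneracy w - degeneracy w'\<bar> \<le> 2 * sqrt (cut_metric w w')"
proof -
  let ?D = "\<bar>degeneracy w - degeneracy w'\<bar>"
  have "(?D / 2)\<^sup>2 \<le> cut_metric w w'"
    unfolding cut_metric_def
  proof (rule cInf_greatest)
    show "{cut_norm_dist (\<lambda>x y. w (\<sigma> x) (\<sigma> y)) w' |\<sigma>. measure_preserving_unit \<sigma>} \<noteq> {}"
      using mp_id by blast
    fix c assume "c \<in> {cut_norm_dist (\<lambda>x y. w (\<sigma> x) (\<sigma> y)) w' |\<sigma>. measure_preserving_unit \<sigma>}"
    then obtain \<sigma> where "measure_preserving_unit \<sigma>" "c = cut_norm_dist (\<lambda>x y. w (\<sigma> x) (\<sigma> y)) w'" by blast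
    then show "(?D / 2)\<^sup>2 \<le> c" using per_sigma[OF assms] by simp
  qed
  then have "?D / 2 \<le> sqrt (cut_metric w w')" by (rule real_le_rsqrt)
  then show ?thesis by simp
qed


end
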